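(* Let $K$ be a finite field of characteristic $p$ and let $d$ be an integer with $\gcd(d,|K|-1)=1$ that is nondegenerate over $K$. Then there exist $a,b\in K^\times$ with $W_{K,d}(a)>0$ and $W_{K,d}(b)<0$.
   Context: $\psi_K(x)=\exp(2\pi i\,\mathrm{Tr}_{K/\mathbb{F}_p}(x)/p)$ is the canonical additive character of $K$, and for $a\in K$ the Weil sum is $W_{K,d}(a)=\sum_{x\in K}\psi_K(x^d+ax)$; these values are real numbers. $d$ is degenerate over $K$ if $d\equiv p^j\pmod{|K|-1}$ for some integer $j$, and nondegenerate otherwise. *)

theory Defs
  imports Complex_Main "HOL-Library.Cardinality" "HOL-Number_Theory.Cong"
begin

definition field_degree :: "'a::{finite,field} itself \<Rightarrow> nat" where
  "field_degree t = (THE n. CARD('a) = CHAR('a) ^ n)"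

definition abs_trace :: "'a::{finite,field} \<Rightarrow> 'a" where
  "abs_trace x = (\<Sum>j<field_degree (TYPE('a)). x ^ (CHAR('a) ^ j))"

definition trace_nat :: "'a::{finite,field} \<Rightarrow> nat" where
  "trace_nat x = (THE m. m < CHAR('a) \<and> of_nat m = abs_trace x)"

definition psi :: "'a::{finite,field} \<Rightarrow> complex" where
  "psi x = exp (2 * pi * \<i> * of_nat (trace_nat x) / of_nat CHAR('a))"

definition weil_sum :: "nat \<Rightarrow> 'a::{finite,field} \<Rightarrow> complex" where
  "weil_sum d a = (\<Sum>x\<in>(UNIV::'a set). psi (x ^ d + a * x))"

definition degenerate :: "'a::{finite,field} itself \<Rightarrow> nat \<Rightarrow> bool" where
  "degenerate t d = (\<exists>j. [d = CHAR('a) ^ j] (mod (CARD('a) - 1)))"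

end

theory Submission
  imports Defs "HOL-Computational_Algebra.Polynomial" "HOL-Computational_Algebra.Primes"
begin



lemma char_prime: "prime CHAR('a::{finite,field})"
proof -
  have "CHAR('a) > 0" by (rule finite_imp_CHAR_pos) simp
  thus ?thesis by (rule prime_CHAR_semidom)
qed

lemma card_ge2: "CARD('a::{finite,field}) \<ge> 2"
proof -
  have "{0::'a, 1} \<subseteq> UNIV" by auto
  hence "card {0::'a,1} \<le> CARD('a)" by (intro card_mono) auto
  thus ?thesis by simp
qed

lemma pow_card: "(x::'a::{finite,field}) ^ CARD('a) = x"
proof (cases "x = 0")
  case False
  have "x * (\<Prod>y\<in>UNIV-{0}. x * y) = x * x ^ (card (UNIV :: 'a set) - 1) * \<Prod>(UNIV-{0})"
    by (simp add: prod.distrib mult_ac)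
  also have "x * x ^ (card (UNIV :: 'a set) - 1) = x ^ Suc (card (UNIV :: 'a set) - 1)"
    by (subst power_Suc) auto
  also have "Suc (card (UNIV :: 'a set) - 1) = card (UNIV :: 'a set)"
    using finite_UNIV_card_ge_0[where ?'a = 'a] by simp
  also have "(\<Prod>y\<in>UNIV-{0}. x * y) = (\<Prod>y\<in>UNIV-{0}. y)"
    by (rule prod.reindex_bij_witness[of _ "\<lambda>y. y / x" "\<lambda>y. x * y"]) (use False in auto)
  finally show ?thesis
    by simp
qed (use finite_UNIV_card_ge_0[where ?'a = 'a] in auto)

lemma pow_card1: "(x::'a::{finite,field}) \<noteq> 0 \<Longrightarrow> x ^ (CARD('a) - 1) = 1"
proof -
  assume x: "x \<noteq> 0"
  have "x * x ^ (CARD('a) - 1) = x ^ Suc (CARD('a) - 1)" by (simp only: power_Suc)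
  also have "Suc (CARD('a) - 1) = CARD('a)" using card_ge2[where 'a='a] by simp
  also have "x ^ CARD('a) = x * 1" using pow_card[of x] by simp
  finally have "x * x ^ (CARD('a) - 1) = x * 1" .
  thus ?thesis using x by simp
qed

lemma pow_mod: "(x::'a::{finite,field}) \<noteq> 0 \<Longrightarrow> x ^ m = x ^ (m mod (CARD('a) - 1))"
proof -
  assume x: "x \<noteq> 0"
  have "x ^ m = x ^ ((CARD('a) - 1) * (m div (CARD('a) - 1)) + m mod (CARD('a) - 1))" by simp
  also have "\<dots> = (x ^ (CARD('a) - 1)) ^ (m div (CARD('a) - 1)) * x ^ (m mod (CARD('a) - 1))"
    by (simp only: power_add power_mult)
  finally have "x ^ m = (x ^ (CARD('a) - 1)) ^ (m div (CARD('a) - 1)) * x ^ (m mod (CARD('a) - 1))" .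
  thus ?thesis using pow_card1[OF x] by simp
qed

definition addsub :: "'a::{finite,field} set \<Rightarrow> bool" where
  "addsub S \<longleftrightarrow> 0 \<in> S \<and> (\<forall>x\<in>S. \<forall>y\<in>S. x + y \<in> S)"

lemma addsub_ofnat: "addsub S \<Longrightarrow> x \<in> S \<Longrightarrow> of_nat k * x \<in> S"
  by (induction k) (auto simp: addsub_def distrib_right)

lemma addsub_neg: "addsub S \<Longrightarrow> x \<in> S \<Longrightarrow> - x \<in> (S::'a::{finite,field} set)"
proof -
  assume S: "addsub S" and x: "x \<in> S"
  have "CHAR('a) > 0" using char_prime[where 'a='a] prime_gt_0_nat by blast
  hence p: "CHAR('a) \<ge> 1" by simp
  have "of_nat (CHAR('a) - 1) * x = (of_nat CHAR('a) - 1) * x"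
    using p by (simp add: of_nat_diff)
  also have "\<dots> = - x" by simp
  finally show ?thesis using addsub_ofnat[OF S x, of "CHAR('a) - 1"] by simp
qed

lemma addsub_ext:
  fixes S :: "'a::{finite,field} set"
  assumes S: "addsub S" and v: "v \<notin> S"
  defines "S' \<equiv> (\<lambda>(s,k). s + of_nat k * v) ` (S \<times> {..<CHAR('a)})"
  shows "addsub S'" "card S' = CHAR('a) * card S"
proof -
  let ?p = "CHAR('a)"
  have pp: "prime ?p" by (rule char_prime)
  have ofmod: "of_nat k = (of_nat (k mod ?p) :: 'a)" for k
    by (simp add: of_nat_eq_iff_cong_CHAR)
  show "addsub S'"
    unfolding addsub_def
  proof (intro conjI ballI)
    have "(0,0) \<in> S \<times> {..<?p}" using S pp prime_gt_0_nat by (auto simp: addsub_def)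
    moreover have "(0::'a) = (\<lambda>(s,k). s + of_nat k * v) (0,0)" by simp
    ultimately show "0 \<in> S'" unfolding S'_def by blast
  next
    fix x y assume "x \<in> S'" "y \<in> S'"
    then obtain s1 k1 s2 k2 where h: "s1 \<in> S" "s2 \<in> S" "x = s1 + of_nat k1 * v" "y = s2 + of_nat k2 * v"
      unfolding S'_def by auto
    have "x + y = (s1 + s2) + (of_nat k1 + of_nat k2) * v"
      using h by (simp add: algebra_simps)
    also have "of_nat k1 + of_nat k2 = (of_nat ((k1 + k2) mod ?p) :: 'a)"
      using ofmod[of "k1+k2"] by simp
    finally have "x + y = (s1 + s2) + of_nat ((k1 + k2) mod ?p) * v" .
    moreover have "s1 + s2 \<in> S" using S h by (auto simp: addsub_def)
    moreover have "(k1 + k2) mod ?p < ?p" using pp prime_gt_0_nat by auto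
    ultimately show "x + y \<in> S'" unfolding S'_def by force
  qed
  have inj: "inj_on (\<lambda>(s,k). s + of_nat k * v) (S \<times> {..<?p})"
  proof (rule inj_onI, clarify)
    fix s1 k1 s2 k2
    assume h: "s1 \<in> S" "k1 < ?p" "s2 \<in> S" "k2 < ?p" and eq: "s1 + of_nat k1 * v = s2 + of_nat k2 * v"
    have main: "k1 = k2" if h: "s1 \<in> S" "k1 < ?p" "s2 \<in> S" "k2 < ?p" "k2 \<le> k1"
       and eq: "s1 + of_nat k1 * v = s2 + of_nat k2 * v" for s1 s2 k1 k2
    proof (rule ccontr)
      assume ne: "k1 \<noteq> k2"
      define k where "k = k1 - k2"
      have k: "0 < k" "k < ?p" using h ne unfolding k_def by auto
      have "of_nat k * v = s2 + (- s1)" using eq h(5) unfolding k_def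
        by (simp add: of_nat_diff algebra_simps)
      also have "\<dots> \<in> S" using S h addsub_neg[OF S h(1)] by (auto simp: addsub_def)
      finally have kv: "of_nat k * v \<in> S" .
      have "\<not> ?p dvd k" using k by (auto dest: dvd_imp_le)
      hence "coprime ?p k" using pp prime_imp_coprime by blast
      hence "coprime k ?p" by (simp add: coprime_commute)
      then obtain k' where k': "[k * k' = 1] (mod ?p)"
        using cong_solve_coprime_nat[of k "CHAR('a)"] by auto
      hence "of_nat (k * k') = (of_nat 1 :: 'a)" by (simp only: of_nat_eq_iff_cong_CHAR)
      moreover have "of_nat k' * (of_nat k * v) = of_nat (k * k') * (v::'a)" by (simp add: algebra_simps)
      ultimately have "of_nat k' * (of_nat k * v) = v" by simp
      thus False using addsub_ofnat[OF S kv, of k'] v by (simp only:)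
    qed
    show "s1 = s2 \<and> k1 = k2"
    proof (cases "k2 \<le> k1")
      case True
      with main[OF h True eq] eq show ?thesis by simp
    next
      case False
      with main[of s2 k2 s1 k1] h eq show ?thesis by simp
    qed
  qed
  show "card S' = ?p * card S"
    unfolding S'_def using card_image[OF inj] by (simp add: card_cartesian_product)
qed

lemma card_power_char_aux:
  fixes S :: "'a::{finite,field} set"
  shows "addsub S \<Longrightarrow> \<exists>j. CARD('a) = card S * CHAR('a) ^ j"
proof (induction "CARD('a) - card S" arbitrary: S rule: less_induct)
  case less
  show ?case
  proof (cases "S = UNIV")
    case True thus ?thesis by (auto intro: exI[of _ 0])
  next
    case False
    then obtain v where v: "v \<notin> S" by auto
    define S' where "S' = (\<lambda>(s,k). s + of_nat k * v) ` (S \<times> {..<CHAR('a)})"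
    have a: "addsub S'" "card S' = CHAR('a) * card S"
      using addsub_ext[OF less.prems v] unfolding S'_def by auto
    have p2: "CHAR('a) \<ge> 2" using char_prime[where 'a='a] prime_ge_2_nat by blast
    have cS: "card S > 0" using less.prems by (auto simp: addsub_def card_gt_0_iff)
    have le: "card S' \<le> CARD('a)" by (rule card_mono) auto
    have "1 * card S < CHAR('a) * card S" by (rule mult_strict_right_mono) (use p2 cS in auto)
    hence lt: "card S < card S'" using a by simp
    have "CARD('a) - card S' < CARD('a) - card S"
      by (rule diff_less_mono2[OF lt less_le_trans[OF lt le]])
    from less.hyps[OF this a(1)] obtain j where "CARD('a) = card S' * CHAR('a) ^ j" by blast
    thus ?thesis using a by (auto intro!: exI[of _ "Suc j"] simp: mult_ac)
  qed
qed

lemma card_power_char: "\<exists>n. CARD('a::{finite,field}) = CHAR('a) ^ n"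
proof -
  have "addsub {0::'a}" by (simp add: addsub_def)
  from card_power_char_aux[OF this] show ?thesis by simp
qed

lemma field_degree: "CARD('a::{finite,field}) = CHAR('a) ^ field_degree TYPE('a)"
proof -
  obtain n where n: "CARD('a) = CHAR('a) ^ n" using card_power_char by blast
  have p2: "CHAR('a) \<ge> 2" using char_prime[where 'a='a] prime_ge_2_nat by blast
  have "field_degree TYPE('a) = n"
    unfolding field_degree_def
    by (rule the_equality) (use n p2 in \<open>auto simp: power_inject_exp\<close>)
  thus ?thesis using n by simp
qed

lemma field_degree_pos: "field_degree TYPE('a::{finite,field}) > 0"
  using field_degree[where 'a='a] card_ge2[where 'a='a]
  by (cases "field_degree TYPE('a)") auto




lemma roots_le:
  fixes P :: "'a::{finite,field} poly"
  assumes "P \<noteq> 0" "\<forall>x\<in>A. poly P x = 0"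
  shows "card A \<le> degree P"
proof -
  have "card A \<le> card {x. poly P x = 0}" by (rule card_mono) (use assms in auto)
  also have "\<dots> \<le> degree P" by (rule card_poly_roots_bound) fact
  finally show ?thesis .
qed

lemma frob: "((x::'a::{finite,field}) + y) ^ (CHAR('a) ^ j) = x ^ (CHAR('a) ^ j) + y ^ (CHAR('a) ^ j)"
  by (rule freshmans_dream'[OF char_prime refl])

lemma tr_add: "abs_trace ((x::'a::{finite,field}) + y) = abs_trace x + abs_trace y"
  unfolding abs_trace_def by (simp add: frob sum.distrib)

lemma tr_zero: "abs_trace (0::'a::{finite,field}) = 0"
  unfolding abs_trace_def using char_prime[where 'a='a]
  by (auto simp: prime_gt_0_nat intro!: sum.neutral)

lemma tr_neg: "abs_trace (- (x::'a::{finite,field})) = - abs_trace x"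
  using tr_add[of x "-x"] tr_zero[where 'a='a] by (simp add: eq_neg_iff_add_eq_0 add.commute)

lemma tr_pow: "abs_trace (x::'a::{finite,field}) ^ CHAR('a) = abs_trace x"
proof -
  let ?p = "CHAR('a)" and ?n = "field_degree TYPE('a)"
  define f where "f j = x ^ (?p ^ j)" for j
  have "abs_trace x ^ ?p = (\<Sum>j<?n. f j ^ ?p)"
    unfolding abs_trace_def f_def by (rule freshmans_dream_sum[OF char_prime refl])
  also have "\<dots> = (\<Sum>j<?n. f (Suc j))"
    by (simp add: f_def power_mult[symmetric] mult.commute)
  also have "\<dots> = (\<Sum>j<?n. f j)"
  proof -
    have a: "(\<Sum>j<Suc ?n. f j) = f 0 + (\<Sum>j<?n. f (Suc j))" by (rule sum.lessThan_Suc_shift)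
    have b: "(\<Sum>j<Suc ?n. f j) = (\<Sum>j<?n. f j) + f ?n" by simp
    have "f ?n = f 0" unfolding f_def using pow_card[of x] field_degree[where 'a='a] by simp
    thus ?thesis using a b by (simp add: add.commute)
  qed
  finally show ?thesis unfolding abs_trace_def f_def .
qed

lemma of_nat_pow_char: "(of_nat m :: 'a::{finite,field}) ^ CHAR('a) = of_nat m"
proof (induction m)
  case 0 thus ?case using char_prime[where 'a='a] by (simp add: prime_gt_0_nat)
next
  case (Suc m)
  have "(1 + of_nat m :: 'a) ^ CHAR('a) = 1 ^ CHAR('a) + of_nat m ^ CHAR('a)"
    by (rule freshmans_dream[OF char_prime refl])
  thus ?case unfolding of_nat_Suc using Suc by simp
qed

lemma of_nat_inj_char: "m < CHAR('a) \<Longrightarrow> m' < CHAR('a) \<Longrightarrow> (of_nat m :: 'a::{finite,field}) = of_nat m' \<Longrightarrow> m = m'"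
  by (simp add: of_nat_eq_iff_cong_CHAR cong_less_modulus_unique_nat)

lemma fixed_prime_field:
  fixes y :: "'a::{finite,field}"
  assumes y: "y ^ CHAR('a) = y"
  shows "\<exists>m<CHAR('a). of_nat m = y"
proof (rule ccontr)
  let ?p = "CHAR('a)"
  assume nx: "\<not> ?thesis"
  have p2: "?p \<ge> 2" using char_prime[where 'a='a] prime_ge_2_nat by blast
  define P :: "'a poly" where "P = monom 1 ?p - monom 1 1"
  have polyP: "poly P z = z ^ ?p - z" for z by (simp add: P_def poly_monom)
  have "coeff P ?p = 1" using p2 by (simp add: P_def coeff_monom)
  hence P0: "P \<noteq> 0" by auto
  have dP: "degree P \<le> ?p" unfolding P_def
    by (rule order.trans[OF degree_diff_le_max]) (use p2 in \<open>simp add: degree_monom_eq\<close>)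
  let ?A = "insert y (of_nat ` {..<?p})"
  have inj: "inj_on (of_nat :: nat \<Rightarrow> 'a) {..<?p}"
    by (rule inj_onI) (auto intro: of_nat_inj_char)
  have "y \<notin> of_nat ` {..<?p}" using nx by auto
  hence "card ?A = Suc ?p" using card_image[OF inj] by simp
  moreover have "card ?A \<le> degree P"
    by (rule roots_le[OF P0]) (auto simp: polyP y of_nat_pow_char)
  ultimately show False using dP by simp
qed

lemma trace_nat: "trace_nat (x::'a::{finite,field}) < CHAR('a) \<and> of_nat (trace_nat x) = abs_trace x"
proof -
  have "\<exists>!m. m < CHAR('a) \<and> of_nat m = abs_trace x"
  proof (rule ex_ex1I)
    show "\<exists>m. m < CHAR('a) \<and> of_nat m = abs_trace x"
      using fixed_prime_field[OF tr_pow[of x]] by simp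
  next
    fix m m' assume "m < CHAR('a) \<and> of_nat m = abs_trace x" "m' < CHAR('a) \<and> of_nat m' = abs_trace x"
    thus "m = m'" using of_nat_inj_char[where 'a='a, of m m'] by simp
  qed
  thus ?thesis unfolding trace_nat_def by (rule theI')
qed

lemma trace_nat_eqI: "m < CHAR('a) \<Longrightarrow> of_nat m = abs_trace (x::'a::{finite,field}) \<Longrightarrow> trace_nat x = m"
proof -
  assume h1: "m < CHAR('a)" and h2: "of_nat m = abs_trace x"
  have e: "of_nat (trace_nat x) = (of_nat m::'a)" using trace_nat[of x] h2 by simp
  show "trace_nat x = m" using of_nat_inj_char[where 'a='a, OF _ h1 e] trace_nat[of x] by simp
qed




lemma exp_mod:
  assumes "p > 0"
  shows "exp (2 * pi * \<i> * of_nat k / of_nat p) = exp (2 * pi * \<i> * of_nat (k mod p) / of_nat p)"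
proof -
  have "(of_nat k::complex) = of_nat (k mod p + p * (k div p))" by simp
  also have "\<dots> = of_nat (k mod p) + of_nat p * of_nat (k div p)" by (simp only: of_nat_add of_nat_mult)
  finally have "(of_nat k::complex) = of_nat (k mod p) + of_nat p * of_nat (k div p)" .
  hence "2 * pi * \<i> * of_nat k / of_nat p = 2 * pi * \<i> * of_nat (k mod p) / of_nat p + of_nat (k div p) * (2 * pi * \<i>)"
    using assms by (simp add: field_simps)
  hence "exp (2 * pi * \<i> * of_nat k / of_nat p) = exp (2 * pi * \<i> * of_nat (k mod p) / of_nat p) * exp (of_nat (k div p) * (2 * pi * \<i>))"
    by (simp add: exp_add)
  also have "exp (of_nat (k div p) * (2 * pi * \<i>)) = 1"
    by (simp add: exp_of_nat_mult)
  finally show ?thesis by simp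
qed

lemma psi_add: "psi ((x::'a::{finite,field}) + y) = psi x * psi y"
proof -
  let ?p = "CHAR('a)"
  have p0: "?p > 0" using char_prime[where 'a='a] prime_gt_0_nat by blast
  have "of_nat (trace_nat (x + y)) = (of_nat (trace_nat x + trace_nat y) :: 'a)"
    using trace_nat[of x] trace_nat[of y] trace_nat[of "x+y"] by (simp add: tr_add)
  hence c: "trace_nat (x + y) mod ?p = (trace_nat x + trace_nat y) mod ?p"
    by (simp only: of_nat_add[symmetric] of_nat_eq_iff_cong_CHAR cong_def)
  have "psi x * psi y = exp (2 * pi * \<i> * of_nat (trace_nat x + trace_nat y) / of_nat ?p)"
    unfolding psi_def by (simp add: exp_add[symmetric] add_divide_distrib distrib_left)
  also have "\<dots> = psi (x + y)" unfolding psi_def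
    by (subst (1 2) exp_mod[OF p0]) (simp add: c)
  finally show ?thesis by simp
qed

lemma psi_zero: "psi (0::'a::{finite,field}) = 1"
proof -
  have "trace_nat (0::'a) = 0" using char_prime[where 'a='a]
    by (intro trace_nat_eqI) (auto simp: tr_zero prime_gt_0_nat)
  thus ?thesis by (simp add: psi_def)
qed

lemma norm_psi: "norm (psi (x::'a::{finite,field})) = 1"
  by (simp add: psi_def)

lemma psi_neg: "psi (- (x::'a::{finite,field})) = cnj (psi x)"
proof -
  have a: "psi x * psi (-x) = 1" using psi_add[of x "-x"] psi_zero[where 'a='a] by simp
  have "psi x * cnj (psi x) = 1" using complex_norm_square[of "psi x"] norm_psi[of x] by simp
  with a have "psi x * psi (-x) = psi x * cnj (psi x)" by simp
  moreover have "psi x \<noteq> 0" using a by auto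
  ultimately show ?thesis by simp
qed

lemma psi_eq_1: "psi (x::'a::{finite,field}) = 1 \<Longrightarrow> abs_trace x = 0"
proof -
  assume h: "psi x = 1"
  let ?p = "CHAR('a)" and ?t = "trace_nat x"
  have p0: "?p > 0" using char_prime[where 'a='a] prime_gt_0_nat by blast
  have "Re (psi x) = cos (2 * pi * ?t / ?p)"
    unfolding psi_def by (simp add: Re_exp)
  hence "cos (2 * pi * ?t / ?p) = 1" using h by simp
  then obtain k :: int where k: "2 * pi * ?t / ?p = k * 2 * pi" by (auto simp: cos_one_2pi_int)
  hence "real ?t = k * ?p" using p0 by (simp add: field_simps)
  hence "real_of_int (int ?t) = real_of_int (k * int ?p)" by simp
  hence kt: "int ?t = k * int ?p" by (simp only: of_int_eq_iff)
  have "?t < ?p" using trace_nat[of x] by simp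
  hence a: "k * int ?p < 1 * int ?p" unfolding kt[symmetric] by simp
  have b: "0 \<le> k * int ?p" unfolding kt[symmetric] by simp
  from a have "k < 1" using mult_right_less_imp_less[of k "int ?p" 1] by simp
  moreover from b have "k \<ge> 0" using p0 by (simp add: zero_le_mult_iff)
  ultimately have "k = 0" by simp
  hence "?t = 0" using kt by simp
  thus ?thesis using trace_nat[of x] by simp
qed

lemma tr_nontriv: "\<exists>x::'a::{finite,field}. abs_trace x \<noteq> 0"
proof (rule ccontr)
  assume "\<not> ?thesis"
  hence all: "\<forall>x::'a. abs_trace x = 0" by simp
  let ?p = "CHAR('a)" and ?n = "field_degree TYPE('a)"
  have p2: "?p \<ge> 2" using char_prime[where 'a='a] prime_ge_2_nat by blast
  have n1: "?n \<ge> 1" using field_degree_pos[where 'a='a] by simp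
  define P :: "'a poly" where "P = (\<Sum>j<?n. monom 1 (?p ^ j))"
  have polyP: "poly P z = abs_trace z" for z
    by (simp add: P_def poly_sum poly_monom abs_trace_def)
  have "coeff P (?p ^ (?n - 1)) = (\<Sum>j<?n. if j = ?n - 1 then 1 else 0)"
    unfolding P_def coeff_sum coeff_monom using p2 by (intro sum.cong) (auto simp: power_inject_exp)
  also have "\<dots> = 1" using n1 by simp
  finally have P0: "P \<noteq> 0" by auto
  have dP: "degree P \<le> ?p ^ (?n - 1)" unfolding P_def
  proof (rule degree_sum_le)
    fix j assume "j \<in> {..<?n}"
    hence "?p ^ j \<le> ?p ^ (?n - 1)" using p2 by (intro power_increasing) auto
    thus "degree (monom (1::'a) (?p ^ j)) \<le> ?p ^ (?n - 1)" using degree_monom_le order.trans by blast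
  qed simp
  have "card (UNIV::'a set) \<le> degree P" by (rule roots_le[OF P0]) (simp add: polyP all)
  moreover have "?p ^ (?n - 1) < ?p ^ ?n" using p2 n1 by (intro power_strict_increasing) auto
  ultimately show False using dP field_degree[where 'a='a] by simp
qed

lemma sum_shift: "(\<Sum>x\<in>UNIV. f (x + t)) = (\<Sum>x\<in>(UNIV::'a::{finite,field} set). f x)"
  by (rule sum.reindex_bij_witness[of _ "\<lambda>x. x - t" "\<lambda>x. x + t"]) auto

lemma psi_orth: "(\<Sum>x\<in>UNIV. psi (c * (x::'a::{finite,field}))) = (if c = 0 then of_nat CARD('a) else 0)"
proof (cases "c = 0")
  case True thus ?thesis by (simp add: psi_zero)
next
  case False
  obtain y where y: "abs_trace (y::'a) \<noteq> 0" using tr_nontriv by blast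
  have py: "psi y \<noteq> 1" using psi_eq_1 y by blast
  let ?S = "\<Sum>x\<in>UNIV. psi (c * (x::'a))"
  have "?S = (\<Sum>x\<in>UNIV. psi (c * (x + y / c)))" by (rule sum_shift[symmetric])
  also have "\<dots> = (\<Sum>x\<in>UNIV. psi (c * x) * psi y)"
    using False by (intro sum.cong) (auto simp: distrib_left psi_add)
  also have "\<dots> = ?S * psi y" by (simp add: sum_distrib_right)
  finally have "?S * (1 - psi y) = 0" by (simp add: algebra_simps)
  thus ?thesis using py False by simp
qed




lemma psum_zero:
  assumes nd: "\<not> (CARD('a::{finite,field}) - 1) dvd m"
  shows "(\<Sum>x\<in>UNIV-{0}. (x::'a) ^ m) = 0"
proof -
  let ?q = "CARD('a)" and ?U = "UNIV - {0::'a}"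
  define r where "r = m mod (?q - 1)"
  have q2: "?q \<ge> 2" by (rule card_ge2)
  have r0: "r > 0"
  proof (rule ccontr)
    assume "\<not> r > 0"
    hence "m mod (?q - 1) = 0" unfolding r_def by simp
    hence "(?q - 1) dvd m" by (simp only: mod_eq_0_iff_dvd)
    thus False using nd by simp
  qed
  have rq: "r < ?q - 1" unfolding r_def by (intro mod_less_divisor) (use q2 in simp)
  have "\<exists>t\<in>?U. t ^ r \<noteq> 1"
  proof (rule ccontr)
    assume "\<not> ?thesis"
    hence all: "\<forall>t\<in>?U. t ^ r = 1" by simp
    define P :: "'a poly" where "P = monom 1 r - 1"
    have "coeff P 0 = -1" using r0 by (simp add: P_def coeff_monom)
    hence P0: "P \<noteq> 0" by auto
    have dP: "degree P \<le> r" unfolding P_def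
      by (rule order.trans[OF degree_diff_le_max]) (simp add: degree_monom_eq)
    have "card ?U \<le> degree P" by (rule roots_le[OF P0]) (simp add: P_def poly_monom all)
    moreover have "card ?U = ?q - 1" by (simp add: card_Diff_singleton)
    ultimately show False using dP rq by simp
  qed
  then obtain t :: 'a where t: "t \<noteq> 0" "t ^ r \<noteq> 1" by blast
  have tm: "t ^ m \<noteq> 1" using pow_mod[OF t(1), of m] t(2) unfolding r_def by simp
  let ?S = "\<Sum>x\<in>?U. x ^ m"
  have "?S = (\<Sum>x\<in>?U. (t * x) ^ m)"
    by (rule sum.reindex_bij_witness[of _ "\<lambda>x. t * x" "\<lambda>x. x / t"]) (use t(1) in auto)
  also have "\<dots> = t ^ m * ?S" by (simp add: power_mult_distrib sum_distrib_left)
  finally have eq: "?S = t ^ m * ?S" .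
  have "?S * (1 - t ^ m) = ?S - t ^ m * ?S" by (simp add: algebra_simps)
  also have "\<dots> = 0" using eq[symmetric] by simp
  finally have "?S * (1 - t ^ m) = 0" .
  thus ?thesis using tm by simp
qed

lemma sum_neg: "(\<Sum>x\<in>UNIV. f (- x)) = (\<Sum>x\<in>(UNIV::'a::{finite,field} set). f x)"
  by (rule sum.reindex_bij_witness[of _ "\<lambda>x. - x" "\<lambda>x. - x"]) auto

lemma card_minus1_nonzero: "(of_nat (CARD('a) - 1) :: 'a::{finite,field}) = -1"
proof -
  have "of_nat CARD('a) = (of_nat CHAR('a) ^ field_degree TYPE('a) ::'a)"
    by (subst field_degree) (simp only: of_nat_power)
  also have "\<dots> = 0" using field_degree_pos[where 'a='a] by simp
  finally have "of_nat CARD('a) = (0::'a)" .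
  thus ?thesis using card_ge2[where 'a='a] by (simp add: of_nat_diff)
qed

context
  fixes d :: nat and TY :: "'a::{finite,field} itself"
  assumes cop: "coprime d (CARD('a) - 1)"
    and nondeg: "\<not> degenerate (TYPE('a)) d"
begin

lemma q3: "CARD('a) \<ge> 3"
proof (rule ccontr)
  assume "\<not> ?thesis"
  hence "CARD('a) - 1 = 1" using card_ge2[where 'a='a] by simp
  hence "degenerate TYPE('a) d" unfolding degenerate_def by (auto simp: cong_def)
  thus False using nondeg by simp
qed

lemma d_pos: "d \<ge> 1"
proof (rule ccontr)
  assume "\<not> ?thesis"
  hence "d = 0" by simp
  hence "CARD('a) - 1 = 1" using cop by simp
  thus False using q3 by simp
qed

lemma inv_exp: "\<exists>e. \<forall>x::'a. (x ^ d) ^ e = x \<and> (x ^ e) ^ d = x"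
proof -
  let ?m = "CARD('a) - 1"
  obtain e where e: "[d * e = 1] (mod ?m)" using cong_solve_coprime_nat[OF cop] by auto
  have m2: "?m \<ge> 2" using q3 by simp
  have de: "d * e mod ?m = 1" using e m2 by (simp add: cong_def)
  hence de0: "d * e > 0" by (intro Nat.gr0I) simp
  have "x ^ (d * e) = x" for x :: 'a
  proof (cases "x = 0")
    case True thus ?thesis using de0 by simp
  next
    case False thus ?thesis using pow_mod[OF False, of "d*e"] de by simp
  qed
  thus ?thesis by (intro exI[of _ e]) (simp add: power_mult[symmetric] mult.commute)
qed

lemma sum_pow: "(\<Sum>x\<in>UNIV. f (x ^ d)) = (\<Sum>x\<in>(UNIV::'a set). f x)"
proof -
  obtain e where e: "\<And>x::'a. (x ^ d) ^ e = x \<and> (x ^ e) ^ d = x" using inv_exp by blast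
  show ?thesis
    by (rule sum.reindex_bij_witness[of _ "\<lambda>x. x ^ e" "\<lambda>x. x ^ d"]) (use e in auto)
qed

lemma W0: "weil_sum d (0::'a) = 0"
proof -
  have "weil_sum d (0::'a) = (\<Sum>x\<in>UNIV. psi (x::'a))"
    unfolding weil_sum_def using sum_pow[of psi] by simp
  also have "\<dots> = (\<Sum>x\<in>UNIV. psi (1 * (x::'a)))" by simp
  also have "\<dots> = 0" by (subst psi_orth) simp
  finally show ?thesis .
qed

lemma neg_pow: "- ((- (x::'a)) ^ d) = x ^ d"
proof (cases "CHAR('a) = 2")
  case True
  have n: "- (y::'a) = y" for y by (rule uminus_CHAR_2[OF True])
  show ?thesis by (simp only: n)
next
  case False
  have p: "prime CHAR('a)" by (rule char_prime)
  hence "odd CHAR('a)" using False primes_dvd_imp_eq[OF two_is_prime_nat p] by auto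
  hence "odd (CARD('a))" using field_degree[where 'a='a] by simp
  hence "even (CARD('a) - 1)" using card_ge2[where 'a='a] by simp
  hence "odd d" using cop coprime_common_divisor[of d "CARD('a) - 1" 2] by auto
  thus ?thesis by (simp add: power_minus_odd)
qed

lemma W_real: "weil_sum d (a::'a) \<in> \<real>"
proof -
  have "cnj (weil_sum d a) = (\<Sum>x\<in>UNIV. psi (- (x ^ d + a * x)))"
    unfolding weil_sum_def by (simp add: psi_neg[symmetric])
  also have "\<dots> = (\<Sum>x\<in>UNIV. psi (- ((- x) ^ d + a * (- x))))"
    by (rule sum_neg[symmetric])
  also have "\<dots> = weil_sum d a"
    unfolding weil_sum_def
  proof (intro sum.cong refl)
    fix x :: 'a
    have "- ((- x) ^ d + a * (- x)) = - ((- x) ^ d) + a * x"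
      by (simp only: minus_add_distrib mult_minus_right minus_minus)
    also have "\<dots> = x ^ d + a * x" by (simp only: neg_pow)
    finally show "psi (- ((- x) ^ d + a * (- x))) = psi (x ^ d + a * x)" by (simp only:)
  qed
  finally show ?thesis by (simp add: Reals_cnj_iff)
qed

lemma sum_W: "(\<Sum>a\<in>UNIV. weil_sum d (a::'a)) = of_nat CARD('a)"
proof -
  have "(\<Sum>a\<in>UNIV. weil_sum d (a::'a)) = (\<Sum>x::'a\<in>UNIV. \<Sum>a\<in>UNIV. psi (x ^ d) * psi (x * (a::'a)))"
    unfolding weil_sum_def by (subst sum.swap) (simp add: psi_add mult.commute)
  also have "\<dots> = (\<Sum>x::'a\<in>UNIV. psi (x ^ d) * (if x = 0 then of_nat CARD('a) else 0))"
    by (simp add: sum_distrib_left[symmetric] psi_orth)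
  also have "\<dots> = of_nat CARD('a)"
    using d_pos by (simp add: psi_zero power_0_left if_distrib cong: if_cong)
  finally show ?thesis .
qed

lemma sum_W2: "(\<Sum>a\<in>UNIV. weil_sum d (a::'a) * cnj (weil_sum d a)) = of_nat CARD('a) ^ 2"
proof -
  have eqn: "weil_sum d a * cnj (weil_sum d a) = (\<Sum>x\<in>UNIV. \<Sum>y\<in>UNIV. psi (x ^ d - y ^ d) * psi ((x - y) * a))"
    for a :: 'a
  proof -
    have "weil_sum d a * cnj (weil_sum d a) = (\<Sum>x\<in>UNIV. \<Sum>y\<in>UNIV. psi (x ^ d + a * x) * psi (- (y ^ d + a * y)))"
      unfolding weil_sum_def by (simp add: sum_product psi_neg[symmetric])
    also have "\<dots> = (\<Sum>x\<in>UNIV. \<Sum>y\<in>UNIV. psi (x ^ d - y ^ d) * psi ((x - y) * a))"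
    proof (intro sum.cong refl)
      fix x y :: 'a
      have "psi (x ^ d + a * x) * psi (- (y ^ d + a * y)) = psi ((x ^ d + a * x) + (- (y ^ d + a * y)))"
        by (simp only: psi_add)
      also have "(x ^ d + a * x) + (- (y ^ d + a * y)) = (x ^ d - y ^ d) + (x - y) * a"
        by (simp add: algebra_simps)
      also have "psi \<dots> = psi (x ^ d - y ^ d) * psi ((x - y) * a)" by (simp only: psi_add)
      finally show "psi (x ^ d + a * x) * psi (- (y ^ d + a * y)) = psi (x ^ d - y ^ d) * psi ((x - y) * a)" .
    qed
    finally show ?thesis .
  qed
  have "(\<Sum>a\<in>UNIV. weil_sum d (a::'a) * cnj (weil_sum d a))
        = (\<Sum>a\<in>UNIV. \<Sum>x\<in>UNIV. \<Sum>y\<in>UNIV. psi (x ^ d - y ^ d) * psi ((x - y) * (a::'a)))"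
    by (simp only: eqn)
  also have "\<dots> = (\<Sum>x\<in>UNIV. \<Sum>a\<in>UNIV. \<Sum>y\<in>UNIV. psi (x ^ d - y ^ d) * psi ((x - y) * (a::'a)))"
    by (rule sum.swap)
  also have "\<dots> = (\<Sum>x\<in>UNIV. \<Sum>y\<in>UNIV. \<Sum>a\<in>UNIV. psi (x ^ d - y ^ d) * psi ((x - y) * (a::'a)))"
    by (rule sum.cong[OF refl], rule sum.swap)
  also have "\<dots> = (\<Sum>x\<in>UNIV. \<Sum>y\<in>UNIV. psi (x ^ d - y ^ d) * (\<Sum>a\<in>UNIV. psi ((x - y) * (a::'a))))"
    by (simp only: sum_distrib_left)
  also have "\<dots> = (\<Sum>x\<in>(UNIV::'a set). \<Sum>y\<in>UNIV. (if y = x then of_nat CARD('a) else 0))"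
    by (intro sum.cong refl) (simp add: psi_orth psi_zero)
  also have "\<dots> = of_nat CARD('a) ^ 2" by (simp add: power2_eq_square)
  finally show ?thesis .
qed

lemma norm_W: "norm (weil_sum d (a::'a)) \<le> CARD('a)"
proof -
  have "norm (weil_sum d a) \<le> (\<Sum>x\<in>UNIV. norm (psi (x ^ d + a * x)))"
    unfolding weil_sum_def by (rule norm_sum)
  thus ?thesis by (simp add: norm_psi)
qed

end




context
  fixes d :: nat and TY :: "'a::{finite,field} itself"
  assumes cop: "coprime d (CARD('a) - 1)"
    and nondeg: "\<not> degenerate (TYPE('a)) d"
begin

lemma not_dvd_exp:
  assumes j: "j < field_degree TYPE('a)"
  shows "\<not> (CARD('a) - 1) dvd (CARD('a) - 2 + d * CHAR('a) ^ j)"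
proof
  let ?q = "CARD('a)" and ?p = "CHAR('a)" and ?n = "field_degree TYPE('a)"
  assume dv: "(?q - 1) dvd (?q - 2 + d * ?p ^ j)"
  have q3: "?q \<ge> 3" by (rule q3[OF cop nondeg])
  have c1: "[?q - 2 + d * ?p ^ j = 0] (mod ?q - 1)" using dv by (simp add: cong_0_iff)
  have c2: "[?q - 2 + d * ?p ^ j + 1 = 0 + 1] (mod ?q - 1)" by (rule cong_add[OF c1 cong_refl])
  have e: "?q - 2 + d * ?p ^ j + 1 = d * ?p ^ j + (?q - 1)" using q3 by simp
  have c3: "[d * ?p ^ j + (?q - 1) = 1] (mod ?q - 1)" using c2 unfolding e by simp
  have "[d * ?p ^ j + (?q - 1) = d * ?p ^ j] (mod ?q - 1)" by (simp only: cong_def mod_add_self2)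
  hence c4: "[d * ?p ^ j = 1] (mod ?q - 1)" using c3 cong_sym cong_trans by blast
  have c5: "[d * ?p ^ j * ?p ^ (?n - j) = 1 * ?p ^ (?n - j)] (mod ?q - 1)"
    by (rule cong_mult[OF c4 cong_refl])
  have "d * ?p ^ j * ?p ^ (?n - j) = d * ?p ^ (j + (?n - j))" by (simp add: power_add)
  also have "j + (?n - j) = ?n" using j by simp
  also have "?p ^ ?n = ?q" using field_degree[where 'a='a] by simp
  finally have pe: "d * ?p ^ j * ?p ^ (?n - j) = d * ?q" .
  have c6: "[d * ?q = ?p ^ (?n - j)] (mod ?q - 1)" using c5 unfolding pe by (simp only: mult_1)
  have "(?q - 1 + 1) mod (?q - 1) = 1 mod (?q - 1)" by (rule mod_add_self1)
  moreover have e3: "?q - 1 + 1 = ?q" using q3 by simp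
  ultimately have "?q mod (?q - 1) = 1 mod (?q - 1)" by (simp only:)
  hence "[?q = 1] (mod ?q - 1)" by (simp add: cong_def)
  hence "[d * ?q = d * 1] (mod ?q - 1)" by (rule cong_mult[OF cong_refl])
  hence "[d = d * ?q] (mod ?q - 1)" by (simp add: cong_sym)
  hence "[d = ?p ^ (?n - j)] (mod ?q - 1)" using c6 cong_trans by blast
  hence "degenerate TYPE('a) d" unfolding degenerate_def by blast
  thus False using nondeg by simp
qed

lemma final_contra:
  fixes b :: 'a
  assumes b: "b \<noteq> 0" and tr: "\<And>x. abs_trace (x ^ d) = abs_trace (b * x)"
  shows False
proof -
  let ?q = "CARD('a)" and ?p = "CHAR('a)" and ?n = "field_degree TYPE('a)" and ?U = "UNIV - {0::'a}"
  have q3: "?q \<ge> 3" by (rule q3[OF cop nondeg])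
  have p2: "?p \<ge> 2" using char_prime[where 'a='a] prime_ge_2_nat by blast
  have n1: "?n \<ge> 1" using field_degree_pos[where 'a='a] by simp
  define T where "T = (\<Sum>x\<in>?U. x ^ (?q - 2) * abs_trace (x ^ d))"
  have "T = (\<Sum>x\<in>?U. \<Sum>j<?n. x ^ (?q - 2 + d * ?p ^ j))"
    unfolding T_def abs_trace_def by (simp add: sum_distrib_left power_add power_mult)
  also have "\<dots> = (\<Sum>j<?n. \<Sum>x\<in>?U. x ^ (?q - 2 + d * ?p ^ j))" by (rule sum.swap)
  also have "\<dots> = 0"
    by (intro sum.neutral ballI psum_zero) (use not_dvd_exp in auto)
  finally have T0: "T = 0" .
  have "T = (\<Sum>x\<in>?U. x ^ (?q - 2) * abs_trace (b * x))" unfolding T_def by (simp add: tr)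
  also have "\<dots> = (\<Sum>x\<in>?U. \<Sum>j<?n. b ^ (?p ^ j) * x ^ (?q - 2 + ?p ^ j))"
    unfolding abs_trace_def by (simp add: sum_distrib_left power_add power_mult_distrib mult_ac)
  also have "\<dots> = (\<Sum>j<?n. b ^ (?p ^ j) * (\<Sum>x\<in>?U. x ^ (?q - 2 + ?p ^ j)))"
    by (subst sum.swap) (simp add: sum_distrib_left)
  also have "\<dots> = (\<Sum>j\<in>{0}. b ^ (?p ^ j) * (\<Sum>x\<in>?U. x ^ (?q - 2 + ?p ^ j)))"
  proof (rule sum.mono_neutral_right)
    show "{0} \<subseteq> {..<?n}" using n1 by auto
  next
    show "\<forall>j\<in>{..<?n} - {0}. b ^ (?p ^ j) * (\<Sum>x\<in>?U. x ^ (?q - 2 + ?p ^ j)) = 0"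
    proof
      fix j assume j: "j \<in> {..<?n} - {0}"
      have "?p ^ 1 \<le> ?p ^ j" using j p2 by (intro power_increasing) auto
      hence pj1: "?p ^ j \<ge> 2" using p2 by simp
      have "?p ^ j < ?p ^ ?n" using j p2 by (intro power_strict_increasing) auto
      hence pjq: "?p ^ j < ?q" using field_degree[where 'a='a] by simp
      have "\<not> (?q - 1) dvd (?q - 2 + ?p ^ j)"
      proof
        assume dv: "(?q - 1) dvd (?q - 2 + ?p ^ j)"
        have eq: "?q - 2 + ?p ^ j = (?p ^ j - 1) + (?q - 1)" using q3 pj1 by simp
        from dv have "(?q - 1) dvd ((?p ^ j - 1) + (?q - 1))" by (simp only: eq)
        hence "(?q - 1) dvd (?p ^ j - 1)" by (simp only: dvd_add_left_iff[OF dvd_refl])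
        moreover have "0 < ?p ^ j - 1" "?p ^ j - 1 < ?q - 1" using pj1 pjq by auto
        ultimately show False using dvd_imp_le by fastforce
      qed
      thus "b ^ (?p ^ j) * (\<Sum>x\<in>?U. x ^ (?q - 2 + ?p ^ j)) = 0" by (simp add: psum_zero)
    qed
  qed simp
  also have "\<dots> = b * (\<Sum>x\<in>?U. x ^ (?q - 1))"
  proof -
    have e2: "?q - 2 + 1 = ?q - 1" using q3 by simp
    have "(\<Sum>j\<in>{0::nat}. b ^ (?p ^ j) * (\<Sum>x\<in>?U. x ^ (?q - 2 + ?p ^ j)))
       = b ^ (?p ^ 0) * (\<Sum>x\<in>?U. x ^ (?q - 2 + ?p ^ 0))" by (simp only: sum.insert_remove[OF finite.emptyI] empty_Diff sum.empty add_0_right)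
    also have "\<dots> = b * (\<Sum>x\<in>?U. x ^ (?q - 1))" by (simp only: power_0 power_one_right e2)
    finally show ?thesis .
  qed
  also have "(\<Sum>x\<in>?U. x ^ (?q - 1)) = (\<Sum>x\<in>?U. 1)" by (intro sum.cong refl pow_card1) simp
  also have "\<dots> = of_nat (?q - 1)" by (simp add: card_Diff_singleton)
  also have "\<dots> = -1" by (rule card_minus1_nonzero)
  finally have "T = - b" by simp
  thus False using T0 b by simp
qed

end




lemma unit_Re1: "norm (z::complex) = 1 \<Longrightarrow> Re z = 1 \<Longrightarrow> z = 1"
proof -
  assume n: "norm z = 1" and r: "Re z = 1"
  have "(Im z)\<^sup>2 = 0" using cmod_power2[of z] n r by simp
  hence "Im z = 0" by simp
  thus "z = 1" using r by (simp add: complex_eq_iff)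
qed

context
  fixes d :: nat and TY :: "'a::{finite,field} itself"
  assumes cop: "coprime d (CARD('a) - 1)"
    and nondeg: "\<not> degenerate (TYPE('a)) d"
begin

lemma main_thm:
  "\<exists>(a::'a) (b::'a). a \<noteq> 0 \<and> b \<noteq> 0
           \<and> weil_sum d a \<in> \<real> \<and> Re (weil_sum d a) > 0
           \<and> weil_sum d b \<in> \<real> \<and> Re (weil_sum d b) < 0"
proof -
  let ?q = "real CARD('a)"
  define w where "w a = Re (weil_sum d (a::'a))" for a
  have Wr: "weil_sum d a = of_real (w a)" for a
    unfolding w_def using W_real[OF cop nondeg, of a] by (simp add: of_real_Re)
  have sw: "(\<Sum>a\<in>UNIV. w a) = ?q"
    using arg_cong[OF sum_W[OF cop nondeg], of Re] unfolding w_def by (simp add: Re_sum)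
  have "(\<Sum>a\<in>UNIV. complex_of_real ((w a)\<^sup>2)) = of_nat CARD('a) ^ 2"
    using sum_W2[OF cop nondeg] by (simp add: Wr power2_eq_square)
  hence "complex_of_real (\<Sum>a\<in>UNIV. (w a)\<^sup>2) = complex_of_real (?q ^ 2)" by simp
  hence sw2: "(\<Sum>a\<in>UNIV. (w a)\<^sup>2) = ?q ^ 2" by (simp only: of_real_eq_iff)
  have w0: "w 0 = 0" unfolding w_def using W0[OF cop nondeg] by simp
  have wb: "\<bar>w a\<bar> \<le> ?q" for a
    using abs_Re_le_cmod[of "weil_sum d a"] norm_W[OF cop nondeg, of a] unfolding w_def by linarith
  have qpos: "?q > 0" by simp
  obtain a where a: "a \<noteq> 0" "w a > 0"
  proof (rule ccontr)
    assume "\<not> thesis"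
    hence "w a \<le> 0" for a using that w0 by (cases "a = 0") force+
    hence "(\<Sum>a\<in>UNIV. w a) \<le> 0" by (intro sum_nonpos) auto
    thus False using sw qpos by simp
  qed
  obtain b where b: "b \<noteq> 0" "w b < 0"
  proof (rule ccontr)
    assume "\<not> thesis"
    hence nn: "w a \<ge> 0" for a using that w0 by (cases "a = 0") force+
    have "(\<Sum>a\<in>UNIV. w a * (?q - w a)) = ?q * (\<Sum>a\<in>UNIV. w a) - (\<Sum>a\<in>UNIV. (w a)\<^sup>2)"
      by (simp add: sum_subtractf sum_distrib_left sum_distrib_right power2_eq_square algebra_simps)
    also have "\<dots> = 0" using sw sw2 by (simp add: power2_eq_square)
    finally have s0: "(\<Sum>a\<in>UNIV. w a * (?q - w a)) = 0" .
    have "\<forall>a\<in>UNIV. w a * (?q - w a) = 0"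
      using s0 sum_nonneg_eq_0_iff[of UNIV "\<lambda>a. w a * (?q - w a)"] nn wb
      by (simp add: abs_le_iff)
    hence wq: "w a = 0 \<or> w a = ?q" for a
    proof -
      assume h: "\<forall>a\<in>UNIV. w a * (?q - w a) = 0"
      have "w a * (?q - w a) = 0" using h by blast
      thus ?thesis by auto
    qed
    obtain a0 where a0: "w a0 \<noteq> 0"
    proof (rule ccontr)
      assume "\<not> thesis"
      hence "w a = 0" for a using that by blast
      thus False using sw qpos by simp
    qed
    hence wa0: "w a0 = ?q" using wq by blast
    hence a00: "a0 \<noteq> 0" using w0 qpos by auto
    have nn1: "0 \<le> 1 - Re (psi (z::'a))" for z
      using complex_Re_le_cmod[of "psi z"] norm_psi[of z] by simp
    have "(\<Sum>x\<in>UNIV. Re (psi (x ^ d + a0 * (x::'a)))) = ?q"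
      using wa0 unfolding w_def weil_sum_def by (simp add: Re_sum)
    hence s1: "(\<Sum>x\<in>UNIV. 1 - Re (psi (x ^ d + a0 * (x::'a)))) = 0"
      by (simp add: sum_subtractf)
    have re1: "\<forall>x\<in>UNIV. 1 - Re (psi (x ^ d + a0 * (x::'a))) = 0"
      using sum_nonneg_eq_0_iff[of UNIV "\<lambda>x. 1 - Re (psi (x ^ d + a0 * (x::'a)))"] nn1 s1 by simp
    have tr: "abs_trace (x ^ d) = abs_trace ((- a0) * x)" for x :: 'a
    proof -
      have "Re (psi (x ^ d + a0 * x)) = 1" using re1 by simp
      hence "psi (x ^ d + a0 * x) = 1" by (rule unit_Re1[OF norm_psi])
      hence "abs_trace (x ^ d + a0 * x) = 0" by (rule psi_eq_1)
      hence "abs_trace (x ^ d) + abs_trace (a0 * x) = 0" by (simp add: tr_add)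
      hence h1: "abs_trace (x ^ d) = - abs_trace (a0 * x)" by (simp only: eq_neg_iff_add_eq_0)
      have h2: "abs_trace ((- a0) * x) = - abs_trace (a0 * x)" using tr_neg[of "a0 * x"] by simp
      show ?thesis by (simp only: h1 h2)
    qed
    show False by (rule final_contra[OF cop nondeg, of "- a0"]) (use a00 tr in auto)
  qed
  show ?thesis
    by (rule exI[of _ a], rule exI[of _ b]) (use a b Wr in auto)
qed

end

theorem corollary2p3:
  fixes d :: nat
  assumes "coprime d (CARD('a::{finite,field}) - 1)"
    and "\<not> degenerate (TYPE('a)) d"
  shows "\<exists>(a::'a) (b::'a). a \<noteq> 0 \<and> b \<noteq> 0
           \<and> weil_sum d a \<in> \<real> \<and> Re (weil_sum d a) > 0
           \<and> weil_sum d b \<in> \<real> \<and> Re (weil_sum d b) < 0"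
  by (rule main_thm[OF assms])


end
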